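(* Let $T>0$, $\mathbb{U}\subset\mathbb{R}^m$ compact non-empty, and $f:[0,T]\times\mathbb{R}^n\times\mathbb{U}\to\mathbb{R}^n$ continuous and Lipschitz in $x$ uniformly in $(s,u)$. Let $g\in C(\mathbb{R}^n;\mathbb{R})$ and $\mathcal{X}=\{x\,|\,g(x)\le 0\}$. Let $\underline{v}\in C([0,T]\times\mathbb{R}^n;\mathbb{R})$ be a viscosity subsolution of $-v_t+H(t,x,\nabla v)=0$ on $\{(t,x)\in(0,T)\times\mathbb{R}^n\,|\,\underline{v}(t,x)>0\}$ with $\underline{v}(T,\cdot)=\underline{g}$, where $\underline{g}(x)\le 0$ for all $x\in\mathcal{X}$. Let $\overline{\mathcal{G}}(t)=\{x\,|\,\underline{v}(t,x)\le 0\}$ and $0\le t_1\le t_2\le T$. Then for every $\bar{x}\notin\overline{\mathcal{G}}(t_1)$ and every $u\in\mathcal{U}[t_1,t_2]$, $\varphi(t_2;t_1,\bar{x},u)\notin\overline{\mathcal{G}}(t_2)$.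
   Context: For $t\le t'$, $\mathcal{U}[t,t']$ is the set of measurable maps $u:[t,t']\to\mathbb{U}$, and $\varphi(\cdot;t,x,u)$ denotes the unique absolutely continuous solution of $\dot{x}(s)=f(s,x(s),u(s))$ a.e., $x(t)=x$. The Hamiltonian is $H(t,x,p)=\max_{u\in\mathbb{U}}\langle -p,f(t,x,u)\rangle$. For an open $\Omega\subseteq(0,T)\times\mathbb{R}^n$, $v\in C([0,T]\times\mathbb{R}^n;\mathbb{R})$ is a viscosity subsolution of $-v_t+H(t,x,\nabla v)=0$ on $\Omega$ if for every $\xi\in C^1(\Omega;\mathbb{R})$ such that $v-\xi$ has a local maximum at $(t_0,x_0)\in\Omega$, $-\xi_t(t_0,x_0)+H(t_0,x_0,\nabla\xi(t_0,x_0))\le 0$. *)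

theory Defs
  imports "HOL-Analysis.Analysis"
begin

definition abs_continuous_on :: "real \<Rightarrow> real \<Rightarrow> (real \<Rightarrow> 'a::real_normed_vector) \<Rightarrow> bool" where
  "abs_continuous_on a b y \<longleftrightarrow>
     (\<forall>\<epsilon>>0. \<exists>\<delta>>0. \<forall>(k::nat) (c::nat \<Rightarrow> real) (d::nat \<Rightarrow> real).
        (\<forall>i<k. a \<le> c i \<and> c i \<le> d i \<and> d i \<le> b) \<and>
        (\<forall>i<k. \<forall>j<k. i \<noteq> j \<longrightarrow> d i \<le> c j \<or> d j \<le> c i) \<and>
        (\<Sum>i<k. d i - c i) < \<delta>
        \<longrightarrow> (\<Sum>i<k. norm (y (d i) - y (c i))) < \<epsilon>)"

definition controls :: "'m::euclidean_space set \<Rightarrow> real \<Rightarrow> real \<Rightarrow> (real \<Rightarrow> 'm) set" where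
  "controls UU t t' = {u. u \<in> borel_measurable (lebesgue_on {t..t'}) \<and> (\<forall>s\<in>{t..t'}. u s \<in> UU)}"

definition is_trajectory ::
  "(real \<Rightarrow> 'n::euclidean_space \<Rightarrow> 'm \<Rightarrow> 'n) \<Rightarrow> real \<Rightarrow> real \<Rightarrow> 'n \<Rightarrow> (real \<Rightarrow> 'm) \<Rightarrow> (real \<Rightarrow> 'n) \<Rightarrow> bool" where
  "is_trajectory f t t' x u y \<longleftrightarrow>
     abs_continuous_on t t' y \<and> y t = x \<and>
     (AE s in lebesgue_on {t..t'}. (y has_vector_derivative f s (y s) (u s)) (at s within {t..t'}))"

definition hamiltonian ::
  "(real \<Rightarrow> 'n::euclidean_space \<Rightarrow> 'm \<Rightarrow> 'n) \<Rightarrow> 'm set \<Rightarrow> real \<Rightarrow> 'n \<Rightarrow> 'n \<Rightarrow> real" where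
  "hamiltonian f UU t x p = (SUP u\<in>UU. inner (- p) (f t x u))"

definition C1_with_derivs ::
  "(real \<times> 'n::euclidean_space) set \<Rightarrow> (real \<times> 'n \<Rightarrow> real) \<Rightarrow> (real \<times> 'n \<Rightarrow> real) \<Rightarrow> (real \<times> 'n \<Rightarrow> 'n) \<Rightarrow> bool" where
  "C1_with_derivs \<Omega> \<xi> \<xi>t \<xi>g \<longleftrightarrow>
     continuous_on \<Omega> \<xi>t \<and> continuous_on \<Omega> \<xi>g \<and>
     (\<forall>z\<in>\<Omega>. (\<xi> has_derivative (\<lambda>(h, k). \<xi>t z * h + inner (\<xi>g z) k)) (at z))"

definition viscosity_subsolution ::
  "(real \<Rightarrow> 'n::euclidean_space \<Rightarrow> 'm \<Rightarrow> 'n) \<Rightarrow> 'm set \<Rightarrow> (real \<times> 'n) set \<Rightarrow> (real \<Rightarrow> 'n \<Rightarrow> real) \<Rightarrow> bool" where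
  "viscosity_subsolution f UU \<Omega> v \<longleftrightarrow>
     (\<forall>\<xi> \<xi>t \<xi>g t0 x0. C1_with_derivs \<Omega> \<xi> \<xi>t \<xi>g \<and> (t0, x0) \<in> \<Omega> \<and>
        (\<exists>e>0. \<forall>z\<in>\<Omega> \<inter> ball (t0, x0) e. v (fst z) (snd z) - \<xi> z \<le> v t0 x0 - \<xi> (t0, x0))
        \<longrightarrow> - \<xi>t (t0, x0) + hamiltonian f UU t0 x0 (\<xi>g (t0, x0)) \<le> 0)"

end

theory Submission
  imports Defs
begin


lemma acD:
  assumes "abs_continuous_on a b y" "e > 0"
  shows "\<exists>\<delta>>0. \<forall>(k::nat) (c::nat \<Rightarrow> real) (dd::nat \<Rightarrow> real).
        (\<forall>i<k. a \<le> c i \<and> c i \<le> dd i \<and> dd i \<le> b) \<and>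
        (\<forall>i<k. \<forall>j<k. i \<noteq> j \<longrightarrow> dd i \<le> c j \<or> dd j \<le> c i) \<and>
        (\<Sum>i<k. dd i - c i) < \<delta>
        \<longrightarrow> (\<Sum>i<k. norm (y (dd i) - y (c i))) < e"
    using mp[OF spec[OF assms(1)[unfolded abs_continuous_on_def], of e] assms(2)] .

lemma ac_cont:
  assumes "abs_continuous_on a b y"
  shows "continuous_on {a..b} y"
  unfolding continuous_on_iff
proof (intro ballI allI impI)
  fix x e :: real assume x: "x \<in> {a..b}" and e: "0 < e"
  obtain d where d: "d > 0" and H: "\<forall>(k::nat) (c::nat \<Rightarrow> real) (dd::nat \<Rightarrow> real).
        (\<forall>i<k. a \<le> c i \<and> c i \<le> dd i \<and> dd i \<le> b) \<and>
        (\<forall>i<k. \<forall>j<k. i \<noteq> j \<longrightarrow> dd i \<le> c j \<or> dd j \<le> c i) \<and>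
        (\<Sum>i<k. dd i - c i) < d
        \<longrightarrow> (\<Sum>i<k. norm (y (dd i) - y (c i))) < e"
    using acD[OF assms e] by (elim exE conjE)
  show "\<exists>d>0. \<forall>x'\<in>{a..b}. dist x' x < d \<longrightarrow> dist (y x') (y x) < e"
  proof (rule exI[of _ d], rule conjI[OF d], intro ballI impI)
    fix x' assume x': "x' \<in> {a..b}" "dist x' x < d"
    have "(\<Sum>i<(1::nat). norm (y ((\<lambda>_. max x x') i) - y ((\<lambda>_. min x x') i))) < e"
      by (rule H[rule_format]) (use x x' in \<open>auto simp: dist_real_def\<close>)
    then show "dist (y x') (y x) < e"
      by (cases "x \<le> x'") (auto simp: dist_norm norm_minus_commute max_def min_def)
  qed
qed

lemma ac_sub:
  assumes "abs_continuous_on a b y" "a \<le> a'" "b' \<le> b"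
  shows "abs_continuous_on a' b' y"
  unfolding abs_continuous_on_def
proof (intro allI impI)
  fix e :: real assume e: "e > 0"
  obtain d where d: "d > 0" and H: "\<forall>(k::nat) (c::nat \<Rightarrow> real) (dd::nat \<Rightarrow> real).
        (\<forall>i<k. a \<le> c i \<and> c i \<le> dd i \<and> dd i \<le> b) \<and>
        (\<forall>i<k. \<forall>j<k. i \<noteq> j \<longrightarrow> dd i \<le> c j \<or> dd j \<le> c i) \<and>
        (\<Sum>i<k. dd i - c i) < d
        \<longrightarrow> (\<Sum>i<k. norm (y (dd i) - y (c i))) < e"
    using acD[OF assms(1) e] by (elim exE conjE)
  show "\<exists>\<delta>>0. \<forall>(k::nat) c dd. (\<forall>i<k. a' \<le> c i \<and> c i \<le> dd i \<and> dd i \<le> b') \<and>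
        (\<forall>i<k. \<forall>j<k. i \<noteq> j \<longrightarrow> dd i \<le> c j \<or> dd j \<le> c i) \<and>
        (\<Sum>i<k. dd i - c i) < \<delta> \<longrightarrow> (\<Sum>i<k. norm (y (dd i) - y (c i))) < e"
  proof (rule exI[of _ d], rule conjI[OF d], intro allI impI)
    fix k c dd assume P: "(\<forall>i<(k::nat). a' \<le> c i \<and> c i \<le> dd i \<and> dd i \<le> b') \<and>
        (\<forall>i<k. \<forall>j<k. i \<noteq> j \<longrightarrow> dd i \<le> c j \<or> dd j \<le> c i) \<and>
        (\<Sum>i<k. dd i - c i) < d"
    have "\<forall>i<k. a \<le> c i \<and> c i \<le> dd i \<and> dd i \<le> b" using P assms(2,3) by fastforce
    then show "(\<Sum>i<k. norm (y (dd i) - y (c i))) < e"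
      using H P by blast
  qed
qed

lemma ac_comp:
  fixes G :: "real \<Rightarrow> real"
  assumes ac: "abs_continuous_on a b y" and A: "A \<ge> 0" and B: "B \<ge> 0"
    and bd: "\<And>c d. c \<in> {a..b} \<Longrightarrow> d \<in> {a..b} \<Longrightarrow> c \<le> d \<Longrightarrow> \<bar>G d - G c\<bar> \<le> A * norm (y d - y c) + B * (d - c)"
  shows "abs_continuous_on a b G"
  unfolding abs_continuous_on_def
proof (intro allI impI)
  fix e :: real assume e: "e > 0"
  have pos: "e / (2 * (A + 1)) > 0" using e A by simp
  obtain d1 where d1: "d1 > 0" and H: "\<forall>(k::nat) (c::nat \<Rightarrow> real) (dd::nat \<Rightarrow> real).
        (\<forall>i<k. a \<le> c i \<and> c i \<le> dd i \<and> dd i \<le> b) \<and>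
        (\<forall>i<k. \<forall>j<k. i \<noteq> j \<longrightarrow> dd i \<le> c j \<or> dd j \<le> c i) \<and>
        (\<Sum>i<k. dd i - c i) < d1
        \<longrightarrow> (\<Sum>i<k. norm (y (dd i) - y (c i))) < e / (2 * (A + 1))"
    using acD[OF ac pos] by (elim exE conjE)
  define d where "d = min d1 (e / (2 * (B + 1)))"
  have d: "d > 0" using d1 e B by (simp add: d_def)
  show "\<exists>\<delta>>0. \<forall>(k::nat) c dd. (\<forall>i<k. a \<le> c i \<and> c i \<le> dd i \<and> dd i \<le> b) \<and>
        (\<forall>i<k. \<forall>j<k. i \<noteq> j \<longrightarrow> dd i \<le> c j \<or> dd j \<le> c i) \<and>
        (\<Sum>i<k. dd i - c i) < \<delta> \<longrightarrow> (\<Sum>i<k. norm (G (dd i) - G (c i))) < e"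
  proof (rule exI[of _ d], rule conjI[OF d], intro allI impI)
    fix k c dd assume P: "(\<forall>i<(k::nat). a \<le> c i \<and> c i \<le> dd i \<and> dd i \<le> b) \<and>
        (\<forall>i<k. \<forall>j<k. i \<noteq> j \<longrightarrow> dd i \<le> c j \<or> dd j \<le> c i) \<and>
        (\<Sum>i<k. dd i - c i) < d"
    have "(\<Sum>i<k. dd i - c i) < d1" using P d_def by auto
    then have s1: "(\<Sum>i<k. norm (y (dd i) - y (c i))) < e / (2 * (A + 1))"
      using H P by blast
    have s2: "(\<Sum>i<k. dd i - c i) < e / (2 * (B + 1))" using P d_def by auto
    have "(\<Sum>i<k. norm (G (dd i) - G (c i))) \<le> (\<Sum>i<k. A * norm (y (dd i) - y (c i)) + B * (dd i - c i))"
      by (intro sum_mono) (use P bd in auto)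
    also have "\<dots> = A * (\<Sum>i<k. norm (y (dd i) - y (c i))) + B * (\<Sum>i<k. dd i - c i)"
      by (simp add: sum.distrib sum_distrib_left)
    also have "\<dots> \<le> A * (e / (2 * (A + 1))) + B * (e / (2 * (B + 1)))"
      using s1 s2 A B by (intro add_mono mult_left_mono) auto
    also have "\<dots> < e"
    proof -
      have "A * (e / (2 * (A + 1))) < e / 2" using A e by (simp add: field_simps)
      moreover have "B * (e / (2 * (B + 1))) < e / 2" using B e by (simp add: field_simps)
      ultimately show ?thesis by linarith
    qed
    finally show "(\<Sum>i<k. norm (G (dd i) - G (c i))) < e" .
  qed
qed



lemma intervals_nonoverlap:
  fixes c1 d1 c2 d2 :: real
  assumes "c1 < d1" "c2 < d2" "interior {c1..d1} \<inter> interior {c2..d2} = {}"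
  shows "d1 \<le> c2 \<or> d2 \<le> c1"
proof (rule ccontr)
  assume "\<not> (d1 \<le> c2 \<or> d2 \<le> c1)"
  then have "(max c1 c2 + min d1 d2) / 2 \<in> interior {c1..d1} \<inter> interior {c2..d2}"
    using assms by (cases "c1 \<le> c2"; cases "d1 \<le> d2") (auto simp: max_def min_def)
  then show False using assms(3) by blast
qed

lemma luzin:
  fixes G :: "real \<Rightarrow> real"
  assumes ac: "abs_continuous_on \<alpha> \<beta> G" and Esub: "E \<subseteq> {\<alpha>..\<beta>}" and Eneg: "negligible E"
  shows "negligible (G ` E)"
proof (cases "\<alpha> < \<beta>")
  case False
  then have "E \<subseteq> {\<alpha>}" using Esub by auto
  then have "G ` E \<subseteq> {G \<alpha>}" by auto
  then show ?thesis using negligible_subset negligible_sing by metis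
next
  case True
  have contG: "continuous_on {\<alpha>..\<beta>} G" by (rule ac_cont[OF ac])
  show ?thesis
    unfolding negligible_outer_le
  proof (intro allI impI)
    fix e :: real assume e: "e > 0"
    obtain \<delta> where \<delta>: "\<delta> > 0" and H: "\<forall>(k::nat) (c::nat \<Rightarrow> real) (dd::nat \<Rightarrow> real).
        (\<forall>i<k. \<alpha> \<le> c i \<and> c i \<le> dd i \<and> dd i \<le> \<beta>) \<and>
        (\<forall>i<k. \<forall>j<k. i \<noteq> j \<longrightarrow> dd i \<le> c j \<or> dd j \<le> c i) \<and>
        (\<Sum>i<k. dd i - c i) < \<delta>
        \<longrightarrow> (\<Sum>i<k. norm (G (dd i) - G (c i))) < e"
      using acD[OF ac e] by (elim exE conjE)
    have Emeas: "E \<in> lmeasurable" using Eneg negligible_imp_measurable by blast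
    have E0: "measure lebesgue E = 0" using Eneg negligible_imp_measure0 by blast
    have d2: "\<delta> / 2 > 0" using \<delta> by simp
    have Esub': "E \<subseteq> cbox \<alpha> \<beta>" using Esub by (simp add: cbox_interval)
    obtain \<D> where D_count: "countable \<D>"
      and D_sub: "\<And>K. K \<in> \<D> \<Longrightarrow> K \<subseteq> cbox \<alpha> \<beta> \<and> K \<noteq> {} \<and> (\<exists>c d. K = cbox c d)"
      and D_pw: "pairwise (\<lambda>A B. interior A \<inter> interior B = {}) \<D>"
      and "\<And>u v. cbox u v \<in> \<D> \<Longrightarrow> \<exists>n. \<forall>i\<in>Basis. v \<bullet> i - u \<bullet> i = (\<beta> \<bullet> i - \<alpha> \<bullet> i) / 2 ^ (n::nat)"
      and D_int: "\<And>K. \<lbrakk>K \<in> \<D>; box \<alpha> \<beta> \<noteq> {}\<rbrakk> \<Longrightarrow> interior K \<noteq> {}"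
      and D_cov: "E \<subseteq> \<Union>\<D>" and D_meas: "\<Union>\<D> \<in> lmeasurable"
      and D_le: "measure lebesgue (\<Union>\<D>) \<le> measure lebesgue E + \<delta> / 2"
      by (elim measurable_outer_intervals_bounded[OF Emeas Esub' d2])
    have box_ne: "box \<alpha> \<beta> \<noteq> {}" using True by (simp add: box_ne_empty)
    have "\<forall>K\<in>\<D>. \<exists>lh. K = {fst lh..snd lh} \<and> fst lh < snd lh"
    proof
      fix K assume K: "K \<in> \<D>"
      then obtain c d where cd: "K = cbox c d" using D_sub by blast
      have "interior K \<noteq> {}" using D_int[OF K box_ne] .
      then have "c < d" using cd by (auto simp: cbox_interval)
      then show "\<exists>lh. K = {fst lh..snd lh} \<and> fst lh < snd lh" using cd
        by (intro exI[of _ "(c, d)"]) (auto simp: cbox_interval)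
    qed
    then obtain lh where lh: "\<And>K. K \<in> \<D> \<Longrightarrow> K = {fst (lh K)..snd (lh K)} \<and> fst (lh K) < snd (lh K)"
      by metis
    define lo where "lo K = fst (lh K)" for K
    define hi where "hi K = snd (lh K)" for K
    have K_eq: "\<And>K. K \<in> \<D> \<Longrightarrow> K = {lo K..hi K}" and K_lt: "\<And>K. K \<in> \<D> \<Longrightarrow> lo K < hi K"
      using lh by (auto simp: lo_def hi_def)
    have memK: "\<And>K x. K \<in> \<D> \<Longrightarrow> x \<in> K \<longleftrightarrow> lo K \<le> x \<and> x \<le> hi K"
    proof -
      fix K x assume K: "K \<in> \<D>"
      show "x \<in> K \<longleftrightarrow> lo K \<le> x \<and> x \<le> hi K"
        using arg_cong[OF K_eq[OF K], of "\<lambda>A. x \<in> A"] by simp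
    qed
    have K_in: "\<And>K. K \<in> \<D> \<Longrightarrow> \<alpha> \<le> lo K \<and> hi K \<le> \<beta>"
    proof -
      fix K assume K: "K \<in> \<D>"
      then have "{lo K..hi K} \<subseteq> {\<alpha>..\<beta>}" using D_sub K_eq by (metis cbox_interval)
      then show "\<alpha> \<le> lo K \<and> hi K \<le> \<beta>" using K_lt[OF K] by auto
    qed
    have "\<forall>K\<in>\<D>. \<exists>pq. fst pq \<in> K \<and> snd pq \<in> K \<and> (\<forall>x\<in>K. G (fst pq) \<le> G x \<and> G x \<le> G (snd pq))"
    proof
      fix K assume K: "K \<in> \<D>"
      obtain l r where lr: "K = {l..r}" "l < r" using K_eq[OF K] K_lt[OF K] by blast
      have cK: "compact K" "K \<noteq> {}" using lr by auto
      have cont: "continuous_on K G" using contG K_eq[OF K] K_in[OF K]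
        by (metis atLeastatMost_subset_iff continuous_on_subset)
      obtain p where p: "p \<in> K" "\<forall>x\<in>K. G p \<le> G x" using continuous_attains_inf[OF cK cont] by blast
      obtain q where q: "q \<in> K" "\<forall>x\<in>K. G x \<le> G q" using continuous_attains_sup[OF cK cont] by blast
      show "\<exists>pq. fst pq \<in> K \<and> snd pq \<in> K \<and> (\<forall>x\<in>K. G (fst pq) \<le> G x \<and> G x \<le> G (snd pq))"
        using p q by (intro exI[of _ "(p, q)"]) auto
    qed
    then obtain pq where pq: "\<And>K. K \<in> \<D> \<Longrightarrow> fst (pq K) \<in> K \<and> snd (pq K) \<in> K \<and> (\<forall>x\<in>K. G (fst (pq K)) \<le> G x \<and> G x \<le> G (snd (pq K)))"
      by metis
    define p where "p K = fst (pq K)" for K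
    define q where "q K = snd (pq K)" for K
    have p_in: "\<And>K. K \<in> \<D> \<Longrightarrow> p K \<in> K" and q_in: "\<And>K. K \<in> \<D> \<Longrightarrow> q K \<in> K"
      and pq_bd: "\<And>K x. K \<in> \<D> \<Longrightarrow> x \<in> K \<Longrightarrow> G (p K) \<le> G x \<and> G x \<le> G (q K)"
      using pq by (auto simp: p_def q_def)
    define I where "I K = {G (p K)..G (q K)}" for K
    have GE_sub: "G ` E \<subseteq> (\<Union>K\<in>\<D>. I K)"
    proof
      fix z assume "z \<in> G ` E"
      then obtain x where x: "x \<in> E" "z = G x" by blast
      then obtain K where K: "K \<in> \<D>" "x \<in> K" using D_cov by blast
      then show "z \<in> (\<Union>K\<in>\<D>. I K)" using pq_bd[OF K] x by (auto simp: I_def)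
    qed
    have I_meas: "\<And>K. K \<in> \<D> \<Longrightarrow> I K \<in> fmeasurable lebesgue" by (simp add: I_def)
    have fin_bound: "measure lebesgue (\<Union>K\<in>F. I K) \<le> e" if F: "F \<subseteq> \<D>" "finite F" for F
    proof -
      have "measure lebesgue (\<Union>K\<in>F. I K) \<le> (\<Sum>K\<in>F. measure lebesgue (I K))"
        by (rule measure_UNION_le) (use F I_meas in auto)
      also have "\<dots> = (\<Sum>K\<in>F. G (q K) - G (p K))"
      proof (rule sum.cong[OF refl])
        fix K assume "K \<in> F"
        then have "G (p K) \<le> G (q K)" using pq_bd[of K "p K"] p_in F by auto
        then show "measure lebesgue (I K) = G (q K) - G (p K)" by (simp add: I_def)
      qed
      also have "\<dots> < e"
      proof -
        obtain h where h: "bij_betw h {0..<card F} F" using ex_bij_betw_nat_finite[OF F(2)] by blast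
        define k where "k = card F"
        define cc where "cc i = min (p (h i)) (q (h i))" for i
        define dd where "dd i = max (p (h i)) (q (h i))" for i
        have hF: "\<And>i. i < k \<Longrightarrow> h i \<in> \<D>" using h F unfolding k_def bij_betw_def by auto
        have c1: "\<forall>i<k. \<alpha> \<le> cc i \<and> cc i \<le> dd i \<and> dd i \<le> \<beta>"
        proof (intro allI impI)
          fix i assume i: "i < k"
          have "p (h i) \<in> {lo (h i)..hi (h i)}" "q (h i) \<in> {lo (h i)..hi (h i)}"
            using p_in[OF hF[OF i]] q_in[OF hF[OF i]] K_eq[OF hF[OF i]] by auto
          then show "\<alpha> \<le> cc i \<and> cc i \<le> dd i \<and> dd i \<le> \<beta>"
            using K_in[OF hF[OF i]] by (auto simp: cc_def dd_def)
        qed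
        have c2: "\<forall>i<k. \<forall>j<k. i \<noteq> j \<longrightarrow> dd i \<le> cc j \<or> dd j \<le> cc i"
        proof (intro allI impI)
          fix i j assume ij: "i < k" "j < k" "i \<noteq> j"
          then have "h i \<noteq> h j" using h unfolding k_def bij_betw_def inj_on_def by auto
          then have "interior (h i) \<inter> interior (h j) = {}"
            using D_pw hF ij unfolding pairwise_def by blast
          then have "hi (h i) \<le> lo (h j) \<or> hi (h j) \<le> lo (h i)"
            using intervals_nonoverlap[OF K_lt[OF hF[OF ij(1)]] K_lt[OF hF[OF ij(2)]]]
              K_eq[OF hF[OF ij(1)]] K_eq[OF hF[OF ij(2)]] by metis
          moreover have "p (h i) \<in> {lo (h i)..hi (h i)}" "q (h i) \<in> {lo (h i)..hi (h i)}"
            using p_in[OF hF[OF ij(1)]] q_in[OF hF[OF ij(1)]] K_eq[OF hF[OF ij(1)]] by auto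
          moreover have "p (h j) \<in> {lo (h j)..hi (h j)}" "q (h j) \<in> {lo (h j)..hi (h j)}"
            using p_in[OF hF[OF ij(2)]] q_in[OF hF[OF ij(2)]] K_eq[OF hF[OF ij(2)]] by auto
          ultimately show "dd i \<le> cc j \<or> dd j \<le> cc i"
            by (auto simp: cc_def dd_def)
        qed
        have c3: "(\<Sum>i<k. dd i - cc i) < \<delta>"
        proof -
          have "(\<Sum>i<k. dd i - cc i) \<le> (\<Sum>i<k. hi (h i) - lo (h i))"
          proof (rule sum_mono)
            fix i assume "i \<in> {..<k}"
            then have i: "i < k" by simp
            have "p (h i) \<in> {lo (h i)..hi (h i)}" "q (h i) \<in> {lo (h i)..hi (h i)}"
              using p_in[OF hF[OF i]] q_in[OF hF[OF i]] K_eq[OF hF[OF i]] by auto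
            then show "dd i - cc i \<le> hi (h i) - lo (h i)" by (auto simp: cc_def dd_def)
          qed
          also have "\<dots> = (\<Sum>K\<in>F. hi K - lo K)"
            using sum.reindex_bij_betw[OF h, of "\<lambda>K. hi K - lo K"]
            by (simp add: k_def atLeast0LessThan)
          also have "\<dots> = (\<Sum>K\<in>F. measure lebesgue K)"
          proof (rule sum.cong[OF refl])
            fix K assume "K \<in> F"
            then have "K \<in> \<D>" using F by auto
            then obtain l r where lr: "K = {l..r}" "l < r" "l = lo K" "r = hi K" using K_eq K_lt by blast
            have m: "measure lebesgue {l..r} = r - l" using lr(2) by simp
            show "hi K - lo K = measure lebesgue K" using m lr(1,3,4) by metis
          qed
          also have "\<dots> = measure lebesgue (\<Union>F)"
          proof (rule measure_negligible_finite_Union[symmetric, OF F(2)])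
            show "\<And>S. S \<in> F \<Longrightarrow> S \<in> lmeasurable" using F K_eq by (metis lmeasurable_cbox cbox_interval subsetD)
            show "pairwise (\<lambda>S T. negligible (S \<inter> T)) F"
              unfolding pairwise_def
            proof (intro ballI impI)
              fix S T assume ST: "S \<in> F" "T \<in> F" "S \<noteq> T"
              then have SD: "S \<in> \<D>" "T \<in> \<D>" using F by auto
              have "interior S \<inter> interior T = {}" using D_pw SD ST(3) unfolding pairwise_def by blast
              then have "hi S \<le> lo T \<or> hi T \<le> lo S"
                using intervals_nonoverlap[OF K_lt[OF SD(1)] K_lt[OF SD(2)]] K_eq[OF SD(1)] K_eq[OF SD(2)] by metis
              then have "S \<inter> T \<subseteq> {hi S, hi T}"
                using memK[OF SD(1)] memK[OF SD(2)] by fastforce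
              then show "negligible (S \<inter> T)"
                by (rule negligible_subset[rotated]) (simp add: negligible_finite)
            qed
          qed
          also have "\<dots> \<le> measure lebesgue (\<Union>\<D>)"
          proof (rule measure_mono_fmeasurable)
            show "\<Union>F \<subseteq> \<Union>\<D>" using F by auto
            show "\<Union>\<D> \<in> lmeasurable" by (rule D_meas)
            have "\<And>K. K \<in> F \<Longrightarrow> K \<in> sets lebesgue"
            proof -
              fix K assume "K \<in> F"
              then have "K \<in> \<D>" using F by auto
              then obtain l r where "K = {l..r}" using K_eq by blast
              then show "K \<in> sets lebesgue" by simp
            qed
            then show "\<Union>F \<in> sets lebesgue" using F(2) by (intro sets.finite_Union) auto
          qed
          also have "\<dots> < \<delta>" using D_le E0 \<delta> by simp
          finally show ?thesis .
        qed
        have "(\<Sum>i<k. norm (G (dd i) - G (cc i))) < e"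
          using H c1 c2 c3 by blast
        moreover have "(\<Sum>i<k. norm (G (dd i) - G (cc i))) = (\<Sum>i<k. G (q (h i)) - G (p (h i)))"
        proof (rule sum.cong[OF refl])
          fix i assume "i \<in> {..<k}"
          then have i: "i < k" by simp
          have le: "G (p (h i)) \<le> G (q (h i))" using pq_bd[OF hF[OF i] p_in[OF hF[OF i]]] by auto
          show "norm (G (dd i) - G (cc i)) = G (q (h i)) - G (p (h i))"
            using le by (cases "p (h i) \<le> q (h i)") (auto simp: cc_def dd_def max_def min_def)
        qed
        moreover have "(\<Sum>i<k. G (q (h i)) - G (p (h i))) = (\<Sum>K\<in>F. G (q K) - G (p K))"
          using sum.reindex_bij_betw[OF h, of "\<lambda>K. G (q K) - G (p K)"]
          by (simp add: k_def atLeast0LessThan)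
        ultimately show ?thesis by simp
      qed
      finally show ?thesis by simp
    qed
    have U_meas: "(\<Union>K\<in>\<D>. I K) \<in> fmeasurable lebesgue"
      by (rule fmeasurable_UN_bound[OF D_count I_meas fin_bound]) auto
    have U_le: "measure lebesgue (\<Union>K\<in>\<D>. I K) \<le> e"
      by (rule measure_UN_bound[OF D_count I_meas fin_bound]) auto
    show "\<exists>T. G ` E \<subseteq> T \<and> T \<in> lmeasurable \<and> measure lebesgue T \<le> e"
      using GE_sub U_meas U_le by blast
  qed
qed




lemma pos_deriv_mono:
  fixes G :: "real \<Rightarrow> real"
  assumes ab: "\<alpha> \<le> \<beta>" and cont: "continuous_on {\<alpha>..\<beta>} G" and neg: "negligible (G ` E)"
    and der: "\<And>s. s \<in> {\<alpha>..\<beta>} \<Longrightarrow> s \<notin> E \<Longrightarrow> s < \<beta> \<Longrightarrow> \<exists>g>0. (G has_real_derivative g) (at s within {\<alpha>..\<beta>})"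
  shows "G \<alpha> \<le> G \<beta>"
proof (rule ccontr)
  assume "\<not> G \<alpha> \<le> G \<beta>"
  then have lt: "G \<beta> < G \<alpha>" by simp
  have "\<not> negligible {G \<beta><..<G \<alpha>}"
    using lt negligible_interval(2)[of "G \<beta>" "G \<alpha>"] by (simp add: box_real)
  then obtain c where c: "c \<in> {G \<beta><..<G \<alpha>}" "c \<notin> G ` E"
    using neg negligible_subset by (metis subsetI)
  define S where "S = {\<alpha>..\<beta>} \<inter> G -` {c..}"
  have S_closed: "closed S" unfolding S_def by (rule continuous_closed_preimage[OF cont]) auto
  have S_ne: "S \<noteq> {}" using c ab unfolding S_def by auto
  have S_bdd: "bdd_above S" unfolding S_def by (auto intro: bdd_aboveI[of _ \<beta>])
  define s where "s = Sup S"
  have sS: "s \<in> S" unfolding s_def by (rule closed_contains_Sup[OF S_ne S_bdd S_closed])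
  have s_ge: "\<And>x. x \<in> S \<Longrightarrow> x \<le> s" unfolding s_def by (rule cSup_upper[OF _ S_bdd])
  have s_in: "s \<in> {\<alpha>..\<beta>}" and Gs: "c \<le> G s" using sS unfolding S_def by auto
  have s_lt: "s < \<beta>"
  proof -
    have "s \<noteq> \<beta>" using Gs c by auto
    then show ?thesis using s_in by auto
  qed
  have right: "\<And>x. x \<in> {\<alpha>..\<beta>} \<Longrightarrow> s < x \<Longrightarrow> G x < c"
  proof (rule ccontr)
    fix x assume x: "x \<in> {\<alpha>..\<beta>}" "s < x" "\<not> G x < c"
    then have "x \<in> S" unfolding S_def by auto
    then show False using s_ge x by force
  qed
  have Gs_eq: "G s = c"
  proof (rule ccontr)
    assume "G s \<noteq> c"
    then have gt: "G s - c > 0" using Gs by simp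
    obtain d where d: "d > 0" "\<And>x. x \<in> {\<alpha>..\<beta>} \<Longrightarrow> dist x s < d \<Longrightarrow> dist (G x) (G s) < G s - c"
      using cont s_in gt unfolding continuous_on_iff by metis
    define x where "x = min \<beta> (s + d / 2)"
    have x: "x \<in> {\<alpha>..\<beta>}" "s < x" "dist x s < d" using s_in s_lt d(1)
      by (auto simp: x_def dist_real_def)
    have "dist (G x) (G s) < G s - c" using d(2)[OF x(1) x(3)] .
    then have "G x > c" by (auto simp: dist_real_def)
    then show False using right[OF x(1) x(2)] by simp
  qed
  have "s \<notin> E" using c(2) Gs_eq by auto
  then obtain g where g: "g > 0" "(G has_real_derivative g) (at s within {\<alpha>..\<beta>})"
    using der[OF s_in _ s_lt] by blast
  obtain d where d: "d > 0" "\<And>h. h > 0 \<Longrightarrow> s + h \<in> {\<alpha>..\<beta>} \<Longrightarrow> h < d \<Longrightarrow> G s < G (s + h)"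
    using has_real_derivative_pos_inc_right[OF g(2) g(1)] by blast
  define h where "h = min (d / 2) (\<beta> - s)"
  have h: "h > 0" "s + h \<in> {\<alpha>..\<beta>}" "h < d" using d(1) s_lt s_in by (auto simp: h_def)
  have "G s < G (s + h)" using d(2)[OF h] .
  moreover have "G (s + h) < c" using right[OF h(2)] h(1) by simp
  ultimately show False using Gs_eq by simp
qed

lemma ac_mono:
  fixes G :: "real \<Rightarrow> real"
  assumes ab: "\<alpha> \<le> \<beta>" and ac: "abs_continuous_on \<alpha> \<beta> G" and neg: "negligible E"
    and der: "\<And>s. s \<in> {\<alpha>..\<beta>} \<Longrightarrow> s \<notin> E \<Longrightarrow> s < \<beta> \<Longrightarrow> \<exists>g>0. (G has_real_derivative g) (at s within {\<alpha>..\<beta>})"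
  shows "G \<alpha> \<le> G \<beta>"
proof (rule pos_deriv_mono[OF ab ac_cont[OF ac], of "E \<inter> {\<alpha>..\<beta>}"])
  show "negligible (G ` (E \<inter> {\<alpha>..\<beta>}))"
    by (rule luzin[OF ac]) (use neg negligible_Int in auto)
  show "\<And>s. s \<in> {\<alpha>..\<beta>} \<Longrightarrow> s \<notin> E \<inter> {\<alpha>..\<beta>} \<Longrightarrow> s < \<beta> \<Longrightarrow> \<exists>g>0. (G has_real_derivative g) (at s within {\<alpha>..\<beta>})"
    using der by blast
qed




lemma hamiltonian_ge:
  fixes f :: "real \<Rightarrow> 'n::euclidean_space \<Rightarrow> 'm::euclidean_space \<Rightarrow> 'n"
  assumes "compact UU" "continuous_on UU (f t x)" "w \<in> UU"
  shows "inner (-p) (f t x w) \<le> hamiltonian f UU t x p"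
proof -
  have "continuous_on UU (\<lambda>w. inner (-p) (f t x w))"
    by (intro continuous_intros assms(2))
  then have "compact ((\<lambda>w. inner (-p) (f t x w)) ` UU)"
    using assms(1) compact_continuous_image by blast
  then have "bdd_above ((\<lambda>w. inner (-p) (f t x w)) ` UU)"
    by (rule bounded_imp_bdd_above[OF compact_imp_bounded])
  then show ?thesis unfolding hamiltonian_def by (rule cSUP_upper[OF assms(3)])
qed

lemma AE_negligible:
  assumes "AE s in lebesgue_on {a..b::real}. P s"
  obtains N where "negligible N" "\<And>s. s \<in> {a..b} \<Longrightarrow> s \<notin> N \<Longrightarrow> P s"
proof -
  from assms obtain N where N: "{x \<in> space (lebesgue_on {a..b}). \<not> P x} \<subseteq> N"
    "emeasure (lebesgue_on {a..b}) N = 0" "N \<in> sets (lebesgue_on {a..b})"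
    by (rule AE_E)
  then have "N \<in> null_sets (lebesgue_on {a..b})" by (simp add: null_sets_def)
  then have "N \<in> null_sets lebesgue" using null_sets_restrict_space[of "{a..b}" lebesgue N] by simp
  then have "negligible N" by (simp add: negligible_iff_null_sets)
  moreover have "\<And>s. s \<in> {a..b} \<Longrightarrow> s \<notin> N \<Longrightarrow> P s" using N(1) by auto
  ultimately show ?thesis using that by blast
qed

lemma real_alg_aux2:
  fixes A e d b h :: real
  shows "(A + A) * inverse e + (d * h + h * d) * inverse b = 2 * d / b * h + 2 / e * A"
  unfolding divide_inverse by algebra

lemma test_C1:
  fixes q :: "'n::euclidean_space"
  shows "C1_with_derivs \<Omega> (\<lambda>z. (norm (snd z - q))\<^sup>2 / \<epsilon> + (fst z - s0)\<^sup>2 / \<beta>)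
           (\<lambda>z. 2 * (fst z - s0) / \<beta>) (\<lambda>z. (2 / \<epsilon>) *\<^sub>R (snd z - q))"
  unfolding C1_with_derivs_def
proof (intro conjI ballI)
  have e1: "(\<lambda>z. 2 * (fst z - s0) / \<beta>) = (\<lambda>z. (2 / \<beta>) * (fst z - s0))" by auto
  show "continuous_on \<Omega> (\<lambda>z. 2 * (fst z - s0) / \<beta>)" unfolding e1 by (intro continuous_intros)
  show "continuous_on \<Omega> (\<lambda>z. (2 / \<epsilon>) *\<^sub>R (snd z - q))" by (intro continuous_intros)
  fix z :: "real \<times> 'n" assume "z \<in> \<Omega>"
  have eq: "(\<lambda>z. (norm (snd z - q))\<^sup>2 / \<epsilon> + (fst z - s0)\<^sup>2 / \<beta>)
      = (\<lambda>z. inner (snd z - q) (snd z - q) * inverse \<epsilon> + (fst z - s0) * (fst z - s0) * inverse \<beta>)"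
    unfolding power2_norm_eq_inner by (simp only: power2_eq_square divide_inverse)
  have d: "((\<lambda>z. inner (snd z - q) (snd z - q) * inverse \<epsilon> + (fst z - s0) * (fst z - s0) * inverse \<beta>) has_derivative
      (\<lambda>hk. (inner (snd z - q) (snd hk - 0) + inner (snd hk - 0) (snd z - q)) * inverse \<epsilon>
         + ((fst z - s0) * (fst hk - 0) + (fst hk - 0) * (fst z - s0)) * inverse \<beta>)) (at z)"
    by (intro derivative_intros)
  have eq2: "(\<lambda>hk. (inner (snd z - q) (snd hk - 0) + inner (snd hk - 0) (snd z - q)) * inverse \<epsilon>
         + ((fst z - s0) * (fst hk - 0) + (fst hk - 0) * (fst z - s0)) * inverse \<beta>)
      = (\<lambda>(h, k). 2 * (fst z - s0) / \<beta> * h + inner ((2 / \<epsilon>) *\<^sub>R (snd z - q)) k)"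
  proof (rule ext, clarify)
    fix h :: real and k :: 'n
    have i1: "inner (snd z - q) k = inner (snd z - q) k" ..
    have i2: "inner k (snd z - q) = inner (snd z - q) k" by (rule inner_commute)
    have i3: "inner ((2 / \<epsilon>) *\<^sub>R (snd z - q)) k = (2 / \<epsilon>) * inner (snd z - q) k" by simp
    show "(inner (snd z - q) (snd (h, k) - 0) + inner (snd (h, k) - 0) (snd z - q)) * inverse \<epsilon>
         + ((fst z - s0) * (fst (h, k) - 0) + (fst (h, k) - 0) * (fst z - s0)) * inverse \<beta>
      = 2 * (fst z - s0) / \<beta> * h + inner ((2 / \<epsilon>) *\<^sub>R (snd z - q)) k"
      unfolding i3 by (simp only: fst_conv snd_conv diff_zero i2) (rule real_alg_aux2)
  qed
  show "((\<lambda>z. (norm (snd z - q))\<^sup>2 / \<epsilon> + (fst z - s0)\<^sup>2 / \<beta>) has_derivative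
          (\<lambda>(h, k). 2 * (fst z - s0) / \<beta> * h + inner ((2 / \<epsilon>) *\<^sub>R (snd z - q)) k)) (at z)"
    using d unfolding eq eq2 .
qed




lemma sq_norm_diff_bound:
  fixes x p q :: "'n::real_normed_vector"
  assumes "norm x \<le> R" "norm p \<le> R" "norm q \<le> R"
  shows "\<bar>(norm (x - p))\<^sup>2 - (norm (x - q))\<^sup>2\<bar> \<le> 4 * R * norm (p - q)"
proof -
  have "(norm (x - p))\<^sup>2 - (norm (x - q))\<^sup>2 = (norm (x - p) - norm (x - q)) * (norm (x - p) + norm (x - q))"
    by (simp add: power2_eq_square algebra_simps)
  then have "\<bar>(norm (x - p))\<^sup>2 - (norm (x - q))\<^sup>2\<bar> = \<bar>norm (x - p) - norm (x - q)\<bar> * (norm (x - p) + norm (x - q))"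
    by (simp add: abs_mult)
  also have "\<dots> \<le> norm (p - q) * (4 * R)"
  proof (rule mult_mono)
    have "\<bar>norm (x - p) - norm (x - q)\<bar> \<le> norm ((x - p) - (x - q))" by (rule norm_triangle_ineq3)
    then show "\<bar>norm (x - p) - norm (x - q)\<bar> \<le> norm (p - q)" by (simp add: norm_minus_commute)
    have "norm (x - p) \<le> 2 * R" using norm_triangle_ineq4[of x p] assms by simp
    moreover have "norm (x - q) \<le> 2 * R" using norm_triangle_ineq4[of x q] assms by simp
    ultimately show "norm (x - p) + norm (x - q) \<le> 4 * R" by simp
  qed auto
  finally show ?thesis by (simp add: mult.commute)
qed

lemma sq_real_diff_bound:
  fixes t c d T :: real
  assumes "t \<in> {0..T}" "c \<in> {0..T}" "d \<in> {0..T}"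
  shows "\<bar>(t - d)\<^sup>2 - (t - c)\<^sup>2\<bar> \<le> 2 * T * \<bar>d - c\<bar>"
proof -
  have "(t - d)\<^sup>2 - (t - c)\<^sup>2 = (c - d) * (2 * t - c - d)" by (simp add: power2_eq_square algebra_simps)
  then have "\<bar>(t - d)\<^sup>2 - (t - c)\<^sup>2\<bar> = \<bar>d - c\<bar> * \<bar>2 * t - c - d\<bar>" by (simp add: abs_mult abs_minus_commute)
  also have "\<dots> \<le> \<bar>d - c\<bar> * (2 * T)"
    by (rule mult_left_mono) (use assms in auto)
  finally show ?thesis by (simp add: mult.commute)
qed

lemma real_alg_aux:
  fixes h A e d b c :: real
  shows "0 - (- h * A + - h * A) * inverse e - (d * (0 - h) + (0 - h) * d) * inverse b + c * (h - 0) - (c / 4) * h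
      = ((2 / e) * A + 2 * d / b + 3 * c / 4) * h"
  unfolding divide_inverse by algebra

lemma psi_deriv:
  fixes y :: "real \<Rightarrow> 'n::real_inner"
  assumes "(y has_vector_derivative y') (at s within S)"
  shows "((\<lambda>s. V0 - (norm (x - y s))\<^sup>2 / \<epsilon> - (t - s)\<^sup>2 / \<beta> + c * (s - a) - (c / 4) * s)
     has_real_derivative ((2 / \<epsilon>) * inner (x - y s) y' + 2 * (t - s) / \<beta> + 3 * c / 4)) (at s within S)"
proof -
  have yd: "(y has_derivative (\<lambda>h. h *\<^sub>R y')) (at s within S)"
    using assms by (simp add: has_vector_derivative_def)
  have eq: "(\<lambda>s. V0 - (norm (x - y s))\<^sup>2 / \<epsilon> - (t - s)\<^sup>2 / \<beta> + c * (s - a) - (c / 4) * s)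
      = (\<lambda>s. V0 - inner (x - y s) (x - y s) * inverse \<epsilon> - (t - s) * (t - s) * inverse \<beta> + c * (s - a) - (c / 4) * s)"
    unfolding power2_norm_eq_inner by (simp only: power2_eq_square divide_inverse)
  have d: "((\<lambda>s. V0 - inner (x - y s) (x - y s) * inverse \<epsilon> - (t - s) * (t - s) * inverse \<beta> + c * (s - a) - (c / 4) * s)
     has_derivative (\<lambda>h. 0 - (inner (x - y s) (0 - h *\<^sub>R y') + inner (0 - h *\<^sub>R y') (x - y s)) * inverse \<epsilon>
        - ((t - s) * (0 - h) + (0 - h) * (t - s)) * inverse \<beta> + c * (h - 0) - (c / 4) * h)) (at s within S)"
    by (intro derivative_intros yd)
  have eq2: "(\<lambda>h. 0 - (inner (x - y s) (0 - h *\<^sub>R y') + inner (0 - h *\<^sub>R y') (x - y s)) * inverse \<epsilon>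
        - ((t - s) * (0 - h) + (0 - h) * (t - s)) * inverse \<beta> + c * (h - 0) - (c / 4) * h)
      = (\<lambda>h. ((2 / \<epsilon>) * inner (x - y s) y' + 2 * (t - s) / \<beta> + 3 * c / 4) * h)"
  proof (rule ext)
    fix h :: real
    have i1: "inner (x - y s) (0 - h *\<^sub>R y') = - h * inner (x - y s) y'" by simp
    have i2: "inner (0 - h *\<^sub>R y') (x - y s) = - h * inner (x - y s) y'" by (simp add: inner_commute)
    show "0 - (inner (x - y s) (0 - h *\<^sub>R y') + inner (0 - h *\<^sub>R y') (x - y s)) * inverse \<epsilon>
        - ((t - s) * (0 - h) + (0 - h) * (t - s)) * inverse \<beta> + c * (h - 0) - (c / 4) * h
      = ((2 / \<epsilon>) * inner (x - y s) y' + 2 * (t - s) / \<beta> + 3 * c / 4) * h"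
      unfolding i1 i2 by (rule real_alg_aux)
  qed
  show ?thesis
    unfolding eq has_field_derivative_def using d unfolding eq2 .
qed




lemma real_alg_aux3:
  fixes e b X1 X2 I t s sh c :: real
  shows "(2 / e) * (X1 + X2 + I) + 2 * (t - s) / b + 3 * c / 4
     = ((2 / e) * I + 2 * (t - sh) / b) + 3 * c / 4 + (2 / e) * X1 + (2 / e) * X2 - 2 * (s - sh) / b"
  unfolding divide_inverse by algebra

lemma abs3:
  fixes A B C a b :: real
  assumes "\<bar>A\<bar> \<le> a" "\<bar>B\<bar> \<le> b" "0 \<le> C"
  shows "\<bar>- A - B + C\<bar> \<le> a + b + C"
  using assms by arith

lemma final_comb:
  fixes g A0 c P1 P2 Q a1 a2 b1 b2 b3 :: real
  assumes "g = A0 + 3 * c / 4 + P1 + P2 - Q" "A0 \<ge> 0" "\<bar>P1\<bar> \<le> a1" "\<bar>P2\<bar> \<le> a2"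
    "a1 + a2 = b1 + b2 + b3" "b1 \<le> c / 10" "b2 \<le> c / 10" "b3 \<le> c / 10" "Q \<le> c / 20" "c > 0"
  shows "g \<ge> c / 4"
  using assms by arith

lemma mono_lemma:
  fixes f :: "real \<Rightarrow> 'n::euclidean_space \<Rightarrow> 'm::euclidean_space \<Rightarrow> 'n"
    and v :: "real \<Rightarrow> 'n \<Rightarrow> real" and y :: "real \<Rightarrow> 'n" and u :: "real \<Rightarrow> 'm"
  assumes ab: "0 < a" "a < b" "b < T"
    and UUc: "compact UU"
    and f_cont: "continuous_on ({0..T} \<times> UNIV \<times> UU) (\<lambda>(s, x, w). f s x w)"
    and L: "L \<ge> 0"
    and f_lip: "\<And>s w x x'. s \<in> {0..T} \<Longrightarrow> w \<in> UU \<Longrightarrow> norm (f s x w - f s x' w) \<le> L * norm (x - x')"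
    and v_cont: "continuous_on ({0..T} \<times> UNIV) (\<lambda>(t, x). v t x)"
    and vsub: "viscosity_subsolution f UU {(t, x). t \<in> {0<..<T} \<and> v t x > 0} v"
    and yac: "abs_continuous_on a b y"
    and N: "negligible N"
    and yder: "\<And>s. s \<in> {a..b} \<Longrightarrow> s \<notin> N \<Longrightarrow> u s \<in> UU \<and> (y has_vector_derivative f s (y s) (u s)) (at s within {a..b})"
    and pos: "\<And>s. s \<in> {a..b} \<Longrightarrow> v s (y s) > 0"
  shows "v a (y a) \<le> v b (y b)"
proof (rule ccontr)
  assume contra: "\<not> v a (y a) \<le> v b (y b)"
  define \<Omega> where "\<Omega> = {(t, x). t \<in> {0<..<T} \<and> v t x > 0}"
  define V where "V z = v (fst z) (snd z)" for z :: "real \<times> 'n"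
  define F where "F p = f (fst p) (fst (snd p)) (snd (snd p))" for p :: "real \<times> 'n \<times> 'm"
  have ycont: "continuous_on {a..b} y" by (rule ac_cont[OF yac])
  define K where "K = (\<lambda>s. (s, y s)) ` {a..b}"
  have Kc: "compact K" unfolding K_def
    by (intro compact_continuous_image continuous_on_Pair continuous_on_id ycont compact_Icc)
  have K_mem: "\<And>s. s \<in> {a..b} \<Longrightarrow> (s, y s) \<in> K" unfolding K_def by auto
  have V_cont: "continuous_on ({0..T} \<times> UNIV) V"
    using v_cont by (simp add: V_def split_def)
  have \<Omega>_open: "open \<Omega>"
  proof -
    have eq: "\<Omega> = V -` {0<..} \<inter> ({0<..<T} \<times> UNIV)" by (auto simp: \<Omega>_def V_def)
    have "continuous_on ({0<..<T} \<times> UNIV) V" by (rule continuous_on_subset[OF V_cont]) auto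
    moreover have op: "open ({0<..<T} \<times> (UNIV::'n set))" by (intro open_Times) auto
    ultimately show ?thesis unfolding eq using continuous_on_open_vimage[OF op, of V] by auto
  qed
  have K\<Omega>: "K \<subseteq> \<Omega>" using pos ab by (auto simp: K_def \<Omega>_def)
  obtain r where r: "r > 0" "(\<Union>k\<in>K. cball k r) \<subseteq> \<Omega>"
    using compact_subset_open_imp_cball_epsilon_subset[OF Kc \<Omega>_open K\<Omega>] by blast
  define D where "D = {k + w | k w. k \<in> K \<and> w \<in> cball 0 r}"
  have Dc: "compact D" unfolding D_def by (rule compact_sums[OF Kc compact_cball])
  have D_mem: "\<And>k z. k \<in> K \<Longrightarrow> dist k z \<le> r \<Longrightarrow> z \<in> D"
  proof -
    fix k z assume "k \<in> K" "dist k z \<le> r"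
    then show "z \<in> D" unfolding D_def
      by (intro CollectI exI[of _ k] exI[of _ "z - k"]) (auto simp: dist_norm norm_minus_commute)
  qed
  have D_near: "\<And>z. z \<in> D \<Longrightarrow> \<exists>k\<in>K. dist k z \<le> r"
  proof -
    fix z assume "z \<in> D"
    then obtain k w where kw: "z = k + w" "k \<in> K" "w \<in> cball 0 r" unfolding D_def by blast
    then have "dist k z \<le> r" by (simp add: dist_norm)
    then show "\<exists>k\<in>K. dist k z \<le> r" using kw(2) by blast
  qed
  have D\<Omega>: "D \<subseteq> \<Omega>"
  proof
    fix z assume "z \<in> D"
    then obtain k where k: "k \<in> K" "dist k z \<le> r" using D_near by blast
    then have "z \<in> cball k r" by simp
    then show "z \<in> \<Omega>" using r(2) k(1) by blast
  qed
  have KD: "K \<subseteq> D" using D_mem r(1) by auto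
  have D_T: "\<And>z. z \<in> D \<Longrightarrow> fst z \<in> {0<..<T} \<and> V z > 0"
    using D\<Omega> by (auto simp: \<Omega>_def V_def split: prod.splits)
  have VD_cont: "continuous_on D V"
    by (rule continuous_on_subset[OF V_cont]) (use D_T in \<open>auto simp: less_imp_le\<close>)
  obtain M where M: "\<And>z. z \<in> D \<Longrightarrow> \<bar>V z\<bar> \<le> M"
    using compact_imp_bounded[OF compact_continuous_image[OF VD_cont Dc]]
    unfolding bounded_iff by auto
  have M0: "M \<ge> 0" using M[OF KD[THEN subsetD, OF K_mem[of a]]] ab by auto
  obtain R where R: "\<And>z. z \<in> D \<Longrightarrow> norm z \<le> R"
    using compact_imp_bounded[OF Dc] unfolding bounded_iff by auto
  have R_snd: "\<And>z. z \<in> D \<Longrightarrow> norm (snd z) \<le> R"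
  proof -
    fix z assume "z \<in> D"
    have "norm (snd z) \<le> norm z" using norm_snd_le[of "snd z" "fst z"] by simp
    then show "norm (snd z) \<le> R" using R[OF \<open>z \<in> D\<close>] by linarith
  qed
  have R0: "R \<ge> 0"
  proof -
    have "norm (y a) \<le> R" using R_snd[OF KD[THEN subsetD, OF K_mem[of a]]] ab by simp
    then show ?thesis using norm_ge_zero[of "y a"] by linarith
  qed
  have y_R: "\<And>s. s \<in> {a..b} \<Longrightarrow> norm (y s) \<le> R"
    using R_snd KD K_mem by fastforce
  define C where "C = {0..T} \<times> cball (0::'n) R \<times> UU"
  have Cc: "compact C" unfolding C_def by (intro compact_Times compact_Icc compact_cball UUc)
  have F_cont: "continuous_on C F"
  proof -
    have "continuous_on ({0..T} \<times> UNIV \<times> UU) F" using f_cont by (simp add: F_def split_def)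
    then show ?thesis by (rule continuous_on_subset) (auto simp: C_def)
  qed
  obtain Bf where Bf: "\<And>p. p \<in> C \<Longrightarrow> norm (F p) \<le> Bf"
    using compact_imp_bounded[OF compact_continuous_image[OF F_cont Cc]]
    unfolding bounded_iff by auto
  define Bfa where "Bfa = \<bar>Bf\<bar>"
  have Bfa: "\<And>p. p \<in> C \<Longrightarrow> norm (F p) \<le> Bfa" using Bf unfolding Bfa_def by force
  have Bfa0: "Bfa \<ge> 0" by (simp add: Bfa_def)
  have VD_uc: "uniformly_continuous_on D V" by (rule compact_uniformly_continuous[OF VD_cont Dc])
  have F_uc: "uniformly_continuous_on C F" by (rule compact_uniformly_continuous[OF F_cont Cc])
  define \<delta>0 where "\<delta>0 = V (a, y a) - V (b, y b)"
  have \<delta>0: "\<delta>0 > 0" using contra by (simp add: \<delta>0_def V_def)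
  define c where "c = \<delta>0 / (3 * (b - a))"
  have c0: "c > 0" using \<delta>0 ab by (simp add: c_def)
  have cba: "c * (b - a) = \<delta>0 / 3"
  proof -
    have "b - a \<noteq> 0" using ab by simp
    then show ?thesis unfolding c_def by (simp add: field_simps)
  qed
  define \<eta> where "\<eta> = min (\<delta>0 / 3) (c / (20 * L + 20))"
  have \<eta>0: "\<eta> > 0" using \<delta>0 c0 L by (simp add: \<eta>_def)
  obtain \<rho>v where \<rho>v: "\<rho>v > 0" "\<And>z z'. z \<in> D \<Longrightarrow> z' \<in> D \<Longrightarrow> dist z' z < \<rho>v \<Longrightarrow> dist (V z') (V z) < \<eta>"
    using VD_uc \<eta>0 unfolding uniformly_continuous_on_def by metis
  define \<rho> where "\<rho> = min \<rho>v (r / 2)"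
  have \<rho>0: "\<rho> > 0" using \<rho>v r by (simp add: \<rho>_def)
  define \<epsilon> where "\<epsilon> = \<rho>\<^sup>2 / (4 * M + 4)"
  have \<epsilon>0: "\<epsilon> > 0" using \<rho>0 M0 by (simp add: \<epsilon>_def)
  have \<epsilon>M: "4 * M * \<epsilon> < \<rho>\<^sup>2"
  proof -
    have "4 * M * \<epsilon> = \<rho>\<^sup>2 * (4 * M / (4 * M + 4))" using M0 by (simp add: \<epsilon>_def field_simps)
    also have "\<dots> < \<rho>\<^sup>2 * 1" using M0 \<rho>0 by (intro mult_strict_left_mono) auto
    finally show ?thesis by simp
  qed
  define \<tau> where "\<tau> = c * \<epsilon> / (40 * R + 20)"
  have \<tau>0: "\<tau> > 0" using c0 \<epsilon>0 R0 by (simp add: \<tau>_def)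
  obtain \<rho>f where \<rho>f: "\<rho>f > 0" "\<And>p p'. p \<in> C \<Longrightarrow> p' \<in> C \<Longrightarrow> dist p' p < \<rho>f \<Longrightarrow> dist (F p') (F p) < \<tau>"
    using F_uc \<tau>0 unfolding uniformly_continuous_on_def by metis
  define \<beta> where "\<beta> = min \<epsilon> (\<rho>f\<^sup>2 / (8 * M + 8))"
  have \<beta>0: "\<beta> > 0" using \<epsilon>0 \<rho>f M0 by (simp add: \<beta>_def)
  have \<beta>\<epsilon>: "\<beta> \<le> \<epsilon>" by (simp add: \<beta>_def)
  have \<beta>M: "2 * M * \<beta> < (\<rho>f / 2)\<^sup>2"
  proof -
    have "2 * M * \<beta> \<le> 2 * M * (\<rho>f\<^sup>2 / (8 * M + 8))" using M0 by (intro mult_left_mono) (auto simp: \<beta>_def)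
    also have "\<dots> = (\<rho>f / 2)\<^sup>2 * (8 * M / (8 * M + 8))" using M0 by (simp add: field_simps power2_eq_square)
    also have "\<dots> < (\<rho>f / 2)\<^sup>2 * 1" using M0 \<rho>f by (intro mult_strict_left_mono) auto
    finally show ?thesis by simp
  qed
  define \<Phi> where "\<Phi> zs = V (fst zs) - (norm (snd (fst zs) - y (snd zs)))\<^sup>2 / \<epsilon> - (fst (fst zs) - snd zs)\<^sup>2 / \<beta> + c * (snd zs - a)"
    for zs :: "(real \<times> 'n) \<times> real"
  have \<Phi>_cont: "continuous_on (D \<times> {a..b}) \<Phi>"
  proof -
    have c1: "continuous_on (D \<times> {a..b}) (\<lambda>zs. V (fst zs))"
      by (rule continuous_on_compose2[OF VD_cont continuous_on_fst[OF continuous_on_id]]) auto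
    have c2: "continuous_on (D \<times> {a..b}) (\<lambda>zs. y (snd zs))"
      by (rule continuous_on_compose2[OF ycont continuous_on_snd[OF continuous_on_id]]) auto
    show ?thesis unfolding \<Phi>_def by (intro continuous_intros c1 c2) (use \<epsilon>0 \<beta>0 in auto)
  qed
  have DI_ne: "D \<times> {a..b} \<noteq> {}" using KD K_mem[of a] ab by auto
  obtain zs where zs: "zs \<in> D \<times> {a..b}" and zs_max: "\<And>zs'. zs' \<in> D \<times> {a..b} \<Longrightarrow> \<Phi> zs' \<le> \<Phi> zs"
    using continuous_attains_sup[OF compact_Times[OF Dc compact_Icc] DI_ne \<Phi>_cont] by blast
  obtain th xh sh where zs_eq: "zs = ((th, xh), sh)" by (metis prod.collapse)
  have zD: "(th, xh) \<in> D" and sh: "sh \<in> {a..b}" using zs zs_eq by auto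
  have \<Phi>max: "\<And>z s. z \<in> D \<Longrightarrow> s \<in> {a..b} \<Longrightarrow> \<Phi> (z, s) \<le> \<Phi> ((th, xh), sh)"
    using zs_max zs_eq by auto
  have shD: "(sh, y sh) \<in> D" using KD K_mem[OF sh] by auto
  define P where "P = (norm (xh - y sh))\<^sup>2 / \<epsilon> + (th - sh)\<^sup>2 / \<beta>"
  have Pn: "(norm (xh - y sh))\<^sup>2 / \<epsilon> \<ge> 0" "(th - sh)\<^sup>2 / \<beta> \<ge> 0" using \<epsilon>0 \<beta>0 by auto
  have E1: "P \<le> V (th, xh) - V (sh, y sh)"
    using \<Phi>max[OF shD sh] by (simp add: \<Phi>_def P_def)
  have E2: "P \<le> 2 * M" using E1 M[OF zD] M[OF shD] by linarith
  have E3a: "(norm (xh - y sh))\<^sup>2 \<le> 2 * M * \<epsilon>"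
  proof -
    have "(norm (xh - y sh))\<^sup>2 / \<epsilon> \<le> 2 * M" using E2 Pn unfolding P_def by linarith
    then show ?thesis using \<epsilon>0 by (simp add: divide_le_eq)
  qed
  have E3b: "(th - sh)\<^sup>2 \<le> 2 * M * \<beta>"
  proof -
    have "(th - sh)\<^sup>2 / \<beta> \<le> 2 * M" using E2 Pn unfolding P_def by linarith
    then show ?thesis using \<beta>0 by (simp add: divide_le_eq)
  qed
  have E4: "dist (th, xh) (sh, y sh) < \<rho>"
  proof -
    have "(dist th sh)\<^sup>2 + (dist xh (y sh))\<^sup>2 \<le> 2 * M * \<beta> + 2 * M * \<epsilon>"
      using E3a E3b by (simp add: dist_real_def dist_norm power2_abs)
    also have "\<dots> \<le> 4 * M * \<epsilon>" using \<beta>\<epsilon> M0 by (simp add: mult_left_mono)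
    also have "\<dots> < \<rho>\<^sup>2" by (rule \<epsilon>M)
    finally have "sqrt ((dist th sh)\<^sup>2 + (dist xh (y sh))\<^sup>2) < sqrt (\<rho>\<^sup>2)"
      by (rule real_sqrt_less_mono)
    then show ?thesis using \<rho>0 by (simp add: dist_Pair_Pair)
  qed
  have E5: "V (th, xh) - V (sh, y sh) < \<eta>"
  proof -
    have "dist (th, xh) (sh, y sh) < \<rho>v" using E4 by (simp add: \<rho>_def)
    then have "dist (V (th, xh)) (V (sh, y sh)) < \<eta>" by (rule \<rho>v(2)[OF shD zD])
    then show ?thesis by (simp add: dist_real_def)
  qed
  have E6: "P < \<eta>" using E1 E5 by linarith
  have E7: "\<bar>th - sh\<bar> < \<rho>f / 2"
  proof -
    have "\<bar>th - sh\<bar>\<^sup>2 < (\<rho>f / 2)\<^sup>2" using E3b \<beta>M by simp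
    then show ?thesis by (rule power_less_imp_less_base) (use \<rho>f in simp)
  qed
  have xh_R: "norm xh \<le> R" using R_snd[OF zD] by simp
  have ysh_R: "norm (y sh) \<le> R" using y_R[OF sh] .
  have E8: "norm (xh - y sh) \<le> 2 * R" using norm_triangle_ineq4[of xh "y sh"] xh_R ysh_R by linarith
  have ball_D: "ball (th, xh) (r / 2) \<subseteq> D"
  proof
    fix z assume "z \<in> ball (th, xh) (r / 2)"
    then have "dist (th, xh) z < r / 2" by simp
    moreover have "dist (sh, y sh) (th, xh) < r / 2" using E4 by (simp add: \<rho>_def dist_commute)
    ultimately have "dist (sh, y sh) z \<le> r" using dist_triangle[of "(sh, y sh)" z "(th, xh)"] by linarith
    then show "z \<in> D" by (rule D_mem[OF K_mem[OF sh]])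
  qed
  have th_T: "th \<in> {0..T}" using D_T[OF zD] by simp
  have z\<Omega>: "(th, xh) \<in> \<Omega>" using D\<Omega> zD by auto
  define \<xi> where "\<xi> = (\<lambda>z::real \<times> 'n. (norm (snd z - y sh))\<^sup>2 / \<epsilon> + (fst z - sh)\<^sup>2 / \<beta>)"
  have C1: "C1_with_derivs \<Omega> \<xi> (\<lambda>z. 2 * (fst z - sh) / \<beta>) (\<lambda>z. (2 / \<epsilon>) *\<^sub>R (snd z - y sh))"
    unfolding \<xi>_def by (rule test_C1)
  have locmax: "\<forall>z\<in>\<Omega> \<inter> ball (th, xh) (r / 2). v (fst z) (snd z) - \<xi> z \<le> v th xh - \<xi> (th, xh)"
  proof
    fix z assume "z \<in> \<Omega> \<inter> ball (th, xh) (r / 2)"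
    then have "z \<in> D" using ball_D by auto
    then have "\<Phi> (z, sh) \<le> \<Phi> ((th, xh), sh)" by (rule \<Phi>max[OF _ sh])
    then show "v (fst z) (snd z) - \<xi> z \<le> v th xh - \<xi> (th, xh)"
      by (simp add: \<Phi>_def \<xi>_def V_def)
  qed
  have visc: "- (2 * (fst (th, xh) - sh) / \<beta>) + hamiltonian f UU th xh ((2 / \<epsilon>) *\<^sub>R (snd (th, xh) - y sh)) \<le> 0"
  proof -
    have vs: "\<forall>\<xi> \<xi>t \<xi>g t0 x0. C1_with_derivs \<Omega> \<xi> \<xi>t \<xi>g \<and> (t0, x0) \<in> \<Omega> \<and>
        (\<exists>e>0. \<forall>z\<in>\<Omega> \<inter> ball (t0, x0) e. v (fst z) (snd z) - \<xi> z \<le> v t0 x0 - \<xi> (t0, x0))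
        \<longrightarrow> - \<xi>t (t0, x0) + hamiltonian f UU t0 x0 (\<xi>g (t0, x0)) \<le> 0"
      using vsub unfolding viscosity_subsolution_def \<Omega>_def .
    have "\<exists>e>0. \<forall>z\<in>\<Omega> \<inter> ball (th, xh) e. v (fst z) (snd z) - \<xi> z \<le> v th xh - \<xi> (th, xh)"
      using locmax r(1) by (intro exI[of _ "r / 2"]) auto
    then show ?thesis using vs C1 z\<Omega> by blast
  qed
  have f_sl: "continuous_on UU (f th xh)"
  proof -
    have "continuous_on ({0..T} \<times> UNIV \<times> UU) F" using f_cont by (simp add: F_def split_def)
    then have "continuous_on UU (\<lambda>w. F (th, xh, w))"
      by (rule continuous_on_compose2[of _ F UU "\<lambda>w. (th, xh, w)"]) (use th_T in \<open>auto intro!: continuous_intros\<close>)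
    then show ?thesis by (simp add: F_def)
  qed
  have Hw: "\<And>w. w \<in> UU \<Longrightarrow> 0 \<le> (2 / \<epsilon>) * inner (xh - y sh) (f th xh w) + 2 * (th - sh) / \<beta>"
  proof -
    fix w assume w: "w \<in> UU"
    have "inner (- ((2 / \<epsilon>) *\<^sub>R (xh - y sh))) (f th xh w) \<le> hamiltonian f UU th xh ((2 / \<epsilon>) *\<^sub>R (xh - y sh))"
      by (rule hamiltonian_ge[where f=f and t=th and x=xh, OF UUc f_sl w])
    then show "0 \<le> (2 / \<epsilon>) * inner (xh - y sh) (f th xh w) + 2 * (th - sh) / \<beta>"
      using visc by simp
  qed
  show False
  proof (cases "sh < b")
    case False
    then have shb: "sh = b" using sh by auto
    have aD: "(a, y a) \<in> D" using KD K_mem[of a] ab by auto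
    have "\<Phi> ((a, y a), a) \<le> \<Phi> ((th, xh), sh)" using \<Phi>max[OF aD] ab by auto
    then have "V (a, y a) \<le> V (th, xh) - P + c * (sh - a)" by (simp add: \<Phi>_def P_def)
    moreover have "c * (sh - a) = \<delta>0 / 3" using shb cba by simp
    moreover have "V (th, xh) < V (b, y b) + \<delta>0 / 3" using E5 shb by (simp add: \<eta>_def)
    moreover have "P \<ge> 0" using Pn by (simp add: P_def)
    ultimately show False using \<delta>0 unfolding \<delta>0_def by argo
  next
    case True
    define \<theta> where "\<theta> = c * \<epsilon> / (20 * (Bfa + 2 * R * L) + 20)"
    have RL: "R * L \<ge> 0" using R0 L by simp
    have den: "20 * (Bfa + 2 * R * L) + 20 > 0" using Bfa0 RL by simp
    have \<theta>0: "\<theta> > 0" unfolding \<theta>_def using c0 \<epsilon>0 den by (intro divide_pos_pos mult_pos_pos)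
    obtain \<kappa> where \<kappa>: "\<kappa> > 0" "\<And>s. s \<in> {a..b} \<Longrightarrow> dist s sh < \<kappa> \<Longrightarrow> dist (y s) (y sh) < \<theta>"
      using ycont sh \<theta>0 unfolding continuous_on_iff by metis
    define h where "h = min (b - sh) (min (\<kappa> / 2) (min (\<rho>f / 4) (c * \<beta> / 40)))"
    have h0: "h > 0" using True \<kappa> \<rho>f c0 \<beta>0 by (simp add: h_def)
    have hb: "sh + h \<le> b" by (simp add: h_def)
    have hm: "h \<le> \<kappa> / 2" "h \<le> \<rho>f / 4" "h \<le> c * \<beta> / 40" unfolding h_def by linarith+
    have h\<kappa>: "h < \<kappa>" "h < \<rho>f / 2" "h \<le> c * \<beta> / 40"
      using hm \<kappa>(1) \<rho>f(1) by linarith+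
    have sub: "{sh..sh + h} \<subseteq> {a..b}" using sh hb by auto
    define G where "G = (\<lambda>s. V (th, xh) - (norm (xh - y s))\<^sup>2 / \<epsilon> - (th - s)\<^sup>2 / \<beta> + c * (s - a) - (c / 4) * s)"
    have G\<Phi>: "\<And>s. \<Phi> ((th, xh), s) = G s + (c / 4) * s" by (simp add: \<Phi>_def G_def)
    have yac': "abs_continuous_on sh (sh + h) y" by (rule ac_sub[OF yac]) (use sh hb in auto)
    have acG: "abs_continuous_on sh (sh + h) G"
    proof (rule ac_comp[OF yac', where A = "4 * R / \<epsilon>" and B = "2 * T / \<beta> + 3 * c / 4"])
      show "0 \<le> 4 * R / \<epsilon>" using R0 \<epsilon>0 by simp
      show "0 \<le> 2 * T / \<beta> + 3 * c / 4" using ab \<beta>0 c0 by simp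
      fix c' d assume cd: "c' \<in> {sh..sh + h}" "d \<in> {sh..sh + h}" "c' \<le> d"
      have cdab: "c' \<in> {a..b}" "d \<in> {a..b}" using cd sub by auto
      have n: "\<bar>(norm (xh - y d))\<^sup>2 - (norm (xh - y c'))\<^sup>2\<bar> \<le> 4 * R * norm (y d - y c')"
        by (rule sq_norm_diff_bound[OF xh_R y_R[OF cdab(2)] y_R[OF cdab(1)]])
      have q: "\<bar>(th - d)\<^sup>2 - (th - c')\<^sup>2\<bar> \<le> 2 * T * \<bar>d - c'\<bar>"
        by (rule sq_real_diff_bound) (use th_T cdab ab in auto)
      have eq: "G d - G c' = - (((norm (xh - y d))\<^sup>2 - (norm (xh - y c'))\<^sup>2) / \<epsilon>)
          - (((th - d)\<^sup>2 - (th - c')\<^sup>2) / \<beta>) + (3 * c / 4) * (d - c')"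
        unfolding G_def by (simp add: diff_divide_distrib algebra_simps)
      have a1: "\<bar>((norm (xh - y d))\<^sup>2 - (norm (xh - y c'))\<^sup>2) / \<epsilon>\<bar> \<le> 4 * R / \<epsilon> * norm (y d - y c')"
      proof -
        have "\<bar>((norm (xh - y d))\<^sup>2 - (norm (xh - y c'))\<^sup>2) / \<epsilon>\<bar> = \<bar>(norm (xh - y d))\<^sup>2 - (norm (xh - y c'))\<^sup>2\<bar> / \<epsilon>"
          using \<epsilon>0 by simp
        also have "\<dots> \<le> (4 * R * norm (y d - y c')) / \<epsilon>" by (rule divide_right_mono[OF n]) (use \<epsilon>0 in simp)
        finally show ?thesis by simp
      qed
      have a2: "\<bar>((th - d)\<^sup>2 - (th - c')\<^sup>2) / \<beta>\<bar> \<le> 2 * T / \<beta> * (d - c')"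
      proof -
        have "\<bar>((th - d)\<^sup>2 - (th - c')\<^sup>2) / \<beta>\<bar> = \<bar>(th - d)\<^sup>2 - (th - c')\<^sup>2\<bar> / \<beta>"
          using \<beta>0 by simp
        also have "\<dots> \<le> (2 * T * \<bar>d - c'\<bar>) / \<beta>" by (rule divide_right_mono[OF q]) (use \<beta>0 in simp)
        finally show ?thesis using cd(3) by simp
      qed
      have a3: "(3 * c / 4) * (d - c') \<ge> 0" using c0 cd(3) by simp
      have "\<bar>G d - G c'\<bar> \<le> 4 * R / \<epsilon> * norm (y d - y c') + 2 * T / \<beta> * (d - c') + (3 * c / 4) * (d - c')"
        unfolding eq by (rule abs3[OF a1 a2 a3])
      then show "\<bar>G d - G c'\<bar> \<le> 4 * R / \<epsilon> * norm (y d - y c') + (2 * T / \<beta> + 3 * c / 4) * (d - c')"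
        by (simp add: distrib_right add.assoc)
    qed
    have derG: "\<And>s. s \<in> {sh..sh + h} \<Longrightarrow> s \<notin> N \<Longrightarrow> s < sh + h \<Longrightarrow>
        \<exists>g>0. (G has_real_derivative g) (at s within {sh..sh + h})"
    proof -
      fix s assume s: "s \<in> {sh..sh + h}" "s \<notin> N" "s < sh + h"
      have sab: "s \<in> {a..b}" using s sub by auto
      have us: "u s \<in> UU" and yd: "(y has_vector_derivative f s (y s) (u s)) (at s within {a..b})"
        using yder[OF sab s(2)] by auto
      have yd': "(y has_vector_derivative f s (y s) (u s)) (at s within {sh..sh + h})"
        by (rule has_vector_derivative_within_subset[OF yd sub])
      define g where "g = (2 / \<epsilon>) * inner (xh - y s) (f s (y s) (u s)) + 2 * (th - s) / \<beta> + 3 * c / 4"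
      have Gd: "(G has_real_derivative g) (at s within {sh..sh + h})"
        unfolding G_def g_def by (rule psi_deriv[OF yd'])
      define w where "w = u s"
      define Fs where "Fs = f s (y s) w"
      define Ft where "Ft = f th xh w"
      define A0 where "A0 = (2 / \<epsilon>) * inner (xh - y sh) Ft + 2 * (th - sh) / \<beta>"
      have A0: "A0 \<ge> 0" using Hw[OF us] by (simp add: A0_def Ft_def w_def)
      have w: "w \<in> UU" using us by (simp add: w_def)
      have s_T: "s \<in> {0..T}" using sab ab by auto
      have e1: "norm (y s - y sh) < \<theta>"
      proof -
        have "dist s sh < \<kappa>" using s h\<kappa> by (auto simp: dist_real_def)
        then show ?thesis using \<kappa>(2)[OF sab] by (simp add: dist_norm)
      qed
      have Fs_b: "norm Fs \<le> Bfa"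
      proof -
        have "(s, y s, w) \<in> C" using s_T y_R[OF sab] w by (simp add: C_def)
        then have "norm (F (s, y s, w)) \<le> Bfa" by (rule Bfa)
        then show ?thesis by (simp add: F_def Fs_def)
      qed
      have lip: "norm (Fs - f s xh w) \<le> L * norm (y s - xh)"
        unfolding Fs_def by (rule f_lip[OF s_T w])
      have ucF: "norm (f s xh w - Ft) < \<tau>"
      proof -
        have p: "(th, xh, w) \<in> C" using th_T xh_R w by (simp add: C_def)
        have p': "(s, xh, w) \<in> C" using s_T xh_R w by (simp add: C_def)
        have s1: "sh \<le> s" "s < sh + h" using s by auto
        have "\<bar>s - th\<bar> < \<rho>f" using E7 s1 h\<kappa>(2) unfolding abs_less_iff by linarith
        then have "dist (s, xh, w) (th, xh, w) < \<rho>f" by (simp add: dist_Pair_Pair dist_real_def)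
        then have "dist (F (s, xh, w)) (F (th, xh, w)) < \<tau>" by (rule \<rho>f(2)[OF p p'])
        then show ?thesis by (simp add: F_def Ft_def dist_norm)
      qed
      have dF: "norm (Fs - Ft) \<le> L * \<theta> + L * norm (xh - y sh) + \<tau>"
      proof -
        have "norm (Fs - Ft) \<le> norm (Fs - f s xh w) + norm (f s xh w - Ft)"
          using norm_triangle_ineq[of "Fs - f s xh w" "f s xh w - Ft"] by simp
        also have "\<dots> \<le> L * norm (y s - xh) + \<tau>" using lip ucF by simp
        also have "\<dots> \<le> L * (\<theta> + norm (xh - y sh)) + \<tau>"
        proof -
          have "norm (y s - xh) \<le> norm (y s - y sh) + norm (y sh - xh)"
            using norm_triangle_ineq[of "y s - y sh" "y sh - xh"] by simp
          then have "norm (y s - xh) \<le> \<theta> + norm (xh - y sh)" using e1 by (simp add: norm_minus_commute)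
          then show ?thesis using L by (simp add: mult_left_mono)
        qed
        finally show ?thesis by (simp add: algebra_simps)
      qed
      define X1 where "X1 = inner (y sh - y s) Fs"
      define X2 where "X2 = inner (xh - y sh) (Fs - Ft)"
      have ii: "inner (xh - y s) Fs = X1 + X2 + inner (xh - y sh) Ft"
        by (simp add: X1_def X2_def inner_diff_left inner_diff_right)
      have split: "g = A0 + 3 * c / 4 + (2 / \<epsilon>) * X1 + (2 / \<epsilon>) * X2 - 2 * (s - sh) / \<beta>"
      proof -
        have "g = (2 / \<epsilon>) * (X1 + X2 + inner (xh - y sh) Ft) + 2 * (th - s) / \<beta> + 3 * c / 4"
          unfolding g_def using ii by (simp only: Fs_def w_def)
        then show ?thesis unfolding A0_def by (simp only: real_alg_aux3)
      qed
      define n where "n = norm (xh - y sh)"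
      have n0: "n \<ge> 0" by (simp add: n_def)
      have X1b: "\<bar>X1\<bar> \<le> \<theta> * Bfa"
      proof -
        have "\<bar>X1\<bar> \<le> norm (y sh - y s) * norm Fs" unfolding X1_def by (rule Cauchy_Schwarz_ineq2)
        also have "\<dots> \<le> \<theta> * Bfa" using e1 Fs_b \<theta>0 by (intro mult_mono) (auto simp: norm_minus_commute)
        finally show ?thesis .
      qed
      have X2b: "\<bar>X2\<bar> \<le> 2 * R * (L * \<theta> + \<tau>) + L * n\<^sup>2"
      proof -
        have "\<bar>X2\<bar> \<le> n * norm (Fs - Ft)" unfolding X2_def n_def by (rule Cauchy_Schwarz_ineq2)
        also have "\<dots> \<le> n * (L * \<theta> + L * n + \<tau>)" using dF n0 by (intro mult_left_mono) (auto simp: n_def)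
        also have "\<dots> = n * (L * \<theta> + \<tau>) + L * n\<^sup>2" by (simp add: algebra_simps power2_eq_square)
        also have "\<dots> \<le> 2 * R * (L * \<theta> + \<tau>) + L * n\<^sup>2"
          using E8 L \<theta>0 \<tau>0 by (intro add_right_mono mult_right_mono) (auto simp: n_def)
        finally show ?thesis .
      qed
      have B1: "(2 / \<epsilon>) * (\<theta> * (Bfa + 2 * R * L)) \<le> c / 10"
      proof -
        define S where "S = Bfa + 2 * R * L"
        have S0: "S \<ge> 0" using Bfa0 R0 L by (simp add: S_def)
        have "\<theta> * S = c * \<epsilon> * (S / (20 * S + 20))" by (simp add: \<theta>_def S_def)
        also have "\<dots> \<le> c * \<epsilon> * (1 / 20)"
          using S0 c0 \<epsilon>0 by (intro mult_left_mono) (auto simp: field_simps)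
        finally have "\<theta> * S \<le> c * \<epsilon> / 20" by simp
        then have "(2 / \<epsilon>) * (\<theta> * S) \<le> (2 / \<epsilon>) * (c * \<epsilon> / 20)" using \<epsilon>0 by (intro mult_left_mono) auto
        also have "\<dots> = c / 10" using \<epsilon>0 by (simp add: field_simps)
        finally show ?thesis by (simp add: S_def)
      qed
      have B2: "(2 / \<epsilon>) * (2 * R * \<tau>) \<le> c / 10"
      proof -
        have "(2 / \<epsilon>) * (2 * R * \<tau>) = c * (4 * R / (40 * R + 20))" using \<epsilon>0 by (simp add: \<tau>_def field_simps)
        also have "\<dots> \<le> c * (1 / 10)" using c0 R0 by (intro mult_left_mono) (auto simp: field_simps)
        finally show ?thesis by simp
      qed
      have B3: "(2 / \<epsilon>) * (L * n\<^sup>2) \<le> c / 10"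
      proof -
        have "n\<^sup>2 / \<epsilon> \<le> P" using Pn unfolding P_def n_def by linarith
        then have "n\<^sup>2 / \<epsilon> \<le> c / (20 * L + 20)" using E6 by (simp add: \<eta>_def)
        then have "2 * L * (n\<^sup>2 / \<epsilon>) \<le> 2 * L * (c / (20 * L + 20))" using L by (intro mult_left_mono) auto
        also have "\<dots> = c * (2 * L / (20 * L + 20))" using L by (simp add: field_simps)
        also have "\<dots> \<le> c * (1 / 10)" using c0 L by (intro mult_left_mono) (auto simp: field_simps)
        finally show ?thesis by (simp add: field_simps)
      qed
      have B4: "2 * (s - sh) / \<beta> \<le> c / 20"
      proof -
        have "s - sh \<le> c * \<beta> / 40" using s h\<kappa> by auto
        then have "2 * (s - sh) / \<beta> \<le> 2 * (c * \<beta> / 40) / \<beta>" using \<beta>0 by (intro divide_right_mono) (auto simp del: times_divide_eq_right)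
        also have "\<dots> = c / 20" using \<beta>0 by (simp add: field_simps)
        finally show ?thesis .
      qed
      have T1: "\<bar>(2 / \<epsilon>) * X1\<bar> \<le> (2 / \<epsilon>) * (\<theta> * Bfa)"
      proof -
        have "\<bar>(2 / \<epsilon>) * X1\<bar> = (2 / \<epsilon>) * \<bar>X1\<bar>" using \<epsilon>0 by (simp add: abs_mult)
        also have "\<dots> \<le> (2 / \<epsilon>) * (\<theta> * Bfa)" by (rule mult_left_mono[OF X1b]) (use \<epsilon>0 in simp)
        finally show ?thesis .
      qed
      have T2: "\<bar>(2 / \<epsilon>) * X2\<bar> \<le> (2 / \<epsilon>) * (2 * R * (L * \<theta> + \<tau>) + L * n\<^sup>2)"
      proof -
        have "\<bar>(2 / \<epsilon>) * X2\<bar> = (2 / \<epsilon>) * \<bar>X2\<bar>" using \<epsilon>0 by (simp add: abs_mult)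
        also have "\<dots> \<le> (2 / \<epsilon>) * (2 * R * (L * \<theta> + \<tau>) + L * n\<^sup>2)" by (rule mult_left_mono[OF X2b]) (use \<epsilon>0 in simp)
        finally show ?thesis .
      qed
      have T3: "(2 / \<epsilon>) * (\<theta> * Bfa) + (2 / \<epsilon>) * (2 * R * (L * \<theta> + \<tau>) + L * n\<^sup>2)
          = (2 / \<epsilon>) * (\<theta> * (Bfa + 2 * R * L)) + (2 / \<epsilon>) * (2 * R * \<tau>) + (2 / \<epsilon>) * (L * n\<^sup>2)"
        by (simp add: algebra_simps)
      have "g \<ge> c / 4"
        by (rule final_comb[OF split A0 T1 T2 T3 B1 B2 B3 B4 c0])
      then show "\<exists>g>0. (G has_real_derivative g) (at s within {sh..sh + h})"
        using Gd c0 by (intro exI[of _ g]) auto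
    qed
    have "G sh \<le> G (sh + h)"
      by (rule ac_mono[OF _ acG N derG]) (use h0 in simp)
    moreover have "\<Phi> ((th, xh), sh + h) \<le> \<Phi> ((th, xh), sh)" using \<Phi>max[OF zD] sh hb h0 by auto
    moreover have "(c / 4) * h > 0" using c0 h0 by simp
    moreover have "(c / 4) * (sh + h) = (c / 4) * sh + (c / 4) * h" by (simp add: algebra_simps)
    ultimately show False using G\<Phi>[of sh] G\<Phi>[of "sh + h"] by linarith
  qed
qed
theorem corollary2:
  fixes T :: real
    and UU :: "'m::euclidean_space set"
    and f :: "real \<Rightarrow> 'n::euclidean_space \<Rightarrow> 'm \<Rightarrow> 'n"
    and g gl :: "'n \<Rightarrow> real"
    and vl :: "real \<Rightarrow> 'n \<Rightarrow> real"
    and t1 t2 :: real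
    and xbar :: 'n
    and u :: "real \<Rightarrow> 'm"
    and y :: "real \<Rightarrow> 'n"
  assumes T_pos: "T > 0"
    and U_compact: "compact UU" and U_ne: "UU \<noteq> {}"
    and f_cont: "continuous_on ({0..T} \<times> UNIV \<times> UU) (\<lambda>(s, x, w). f s x w)"
    and f_lip: "\<exists>L. \<forall>s\<in>{0..T}. \<forall>w\<in>UU. \<forall>x x'. norm (f s x w - f s x' w) \<le> L * norm (x - x')"
    and g_cont: "continuous_on UNIV g"
    and vl_cont: "continuous_on ({0..T} \<times> UNIV) (\<lambda>(t, x). vl t x)"
    and vl_sub: "viscosity_subsolution f UU {(t, x). t \<in> {0<..<T} \<and> vl t x > 0} vl"
    and vl_T: "\<forall>x. vl T x = gl x"
    and gl_X: "\<forall>x\<in>{x. g x \<le> 0}. gl x \<le> 0"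
    and t12: "0 \<le> t1" "t1 \<le> t2" "t2 \<le> T"
    and xbar_out: "xbar \<notin> {x. vl t1 x \<le> 0}"
    and u_adm: "u \<in> controls UU t1 t2"
    and y_traj: "is_trajectory f t1 t2 xbar u y"
  shows "y t2 \<notin> {x. vl t2 x \<le> 0}"
proof
  assume y2: "y t2 \<in> {x. vl t2 x \<le> 0}"
  obtain L0 where L0: "\<forall>s\<in>{0..T}. \<forall>w\<in>UU. \<forall>x x'. norm (f s x w - f s x' w) \<le> L0 * norm (x - x')"
    using f_lip by blast
  define L where "L = \<bar>L0\<bar>"
  have L: "L \<ge> 0" by (simp add: L_def)
  have lip: "\<And>s w x x'. s \<in> {0..T} \<Longrightarrow> w \<in> UU \<Longrightarrow> norm (f s x w - f s x' w) \<le> L * norm (x - x')"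
  proof -
    fix s w x x' assume "s \<in> {0..T}" "w \<in> UU"
    then have "norm (f s x w - f s x' w) \<le> L0 * norm (x - x')" using L0 by blast
    also have "\<dots> \<le> L * norm (x - x')" unfolding L_def by (intro mult_right_mono) auto
    finally show "norm (f s x w - f s x' w) \<le> L * norm (x - x')" .
  qed
  have yac: "abs_continuous_on t1 t2 y" and y1: "y t1 = xbar"
    and yae: "AE s in lebesgue_on {t1..t2}. (y has_vector_derivative f s (y s) (u s)) (at s within {t1..t2})"
    using y_traj unfolding is_trajectory_def by auto
  obtain N where N: "negligible N"
    and yd: "\<And>s. s \<in> {t1..t2} \<Longrightarrow> s \<notin> N \<Longrightarrow> (y has_vector_derivative f s (y s) (u s)) (at s within {t1..t2})"
    using AE_negligible[OF yae] by metis
  have uU: "\<And>s. s \<in> {t1..t2} \<Longrightarrow> u s \<in> UU" using u_adm unfolding controls_def by auto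
  have ycont: "continuous_on {t1..t2} y" by (rule ac_cont[OF yac])
  define w where "w s = vl s (y s)" for s
  have wcont: "continuous_on {t1..t2} w"
  proof -
    have "continuous_on {t1..t2} (\<lambda>s. (\<lambda>(t, x). vl t x) (s, y s))"
      by (rule continuous_on_compose2[OF vl_cont continuous_on_Pair[OF continuous_on_id ycont]])
        (use t12 in auto)
    then show ?thesis by (simp add: w_def)
  qed
  have w1: "w t1 > 0" using xbar_out y1 by (simp add: w_def)
  have w2: "w t2 \<le> 0" using y2 by (simp add: w_def)
  define S where "S = {t1..t2} \<inter> w -` {..0}"
  have S_closed: "closed S" unfolding S_def by (rule continuous_closed_preimage[OF wcont]) auto
  have S_ne: "S \<noteq> {}" using w2 t12 unfolding S_def by auto
  have S_bdd: "bdd_below S" unfolding S_def by (auto intro: bdd_belowI[of _ t1])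
  define \<tau> where "\<tau> = Inf S"
  have \<tau>S: "\<tau> \<in> S" unfolding \<tau>_def by (rule closed_contains_Inf[OF S_ne S_bdd S_closed])
  have \<tau>_le: "\<And>s. s \<in> S \<Longrightarrow> \<tau> \<le> s" unfolding \<tau>_def by (rule cInf_lower[OF _ S_bdd])
  have \<tau>_in: "\<tau> \<in> {t1..t2}" and w\<tau>: "w \<tau> \<le> 0" using \<tau>S unfolding S_def by auto
  have \<tau>_gt: "t1 < \<tau>" using \<tau>_in w\<tau> w1 by (cases "\<tau> = t1") auto
  have wpos: "\<And>s. s \<in> {t1..t2} \<Longrightarrow> s < \<tau> \<Longrightarrow> w s > 0"
  proof (rule ccontr)
    fix s assume s: "s \<in> {t1..t2}" "s < \<tau>" "\<not> w s > 0"
    then have "s \<in> S" unfolding S_def by auto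
    then show False using \<tau>_le s(2) by force
  qed
  define a where "a = (t1 + \<tau>) / 2"
  have a: "t1 < a" "a < \<tau>" "0 < a" using \<tau>_gt t12 by (auto simp: a_def)
  have wa: "w a > 0" using wpos[of a] a \<tau>_in by auto
  obtain d where d: "d > 0" "\<And>s. s \<in> {t1..t2} \<Longrightarrow> dist s \<tau> < d \<Longrightarrow> dist (w s) (w \<tau>) < w a - w \<tau>"
    using wcont \<tau>_in wa w\<tau> unfolding continuous_on_iff by (metis diff_gt_0_iff_gt order_le_less_trans)
  define b where "b = max ((a + \<tau>) / 2) (\<tau> - d / 2)"
  have bm: "(a + \<tau>) / 2 \<le> b" "\<tau> - d / 2 \<le> b" "b = (a + \<tau>) / 2 \<or> b = \<tau> - d / 2" unfolding b_def max_def by auto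
  have b: "a < b" "b < \<tau>" "dist b \<tau> < d" using a d(1) bm unfolding dist_real_def by auto
  have b_in: "b \<in> {t1..t2}" using a b \<tau>_in by auto
  have wb: "w b < w a" using d(2)[OF b_in b(3)] by (simp add: dist_real_def)
  have sub: "{a..b} \<subseteq> {t1..t2}" using a b \<tau>_in by auto
  have "w a \<le> w b"
    unfolding w_def
  proof (rule mono_lemma[where f = f and UU = UU and L = L and N = N and u = u and v = vl and y = y and T = T and a = a and b = b])
    show "0 < a" "a < b" using a b by auto
    show "b < T" using b \<tau>_in t12 by auto
    show "compact UU" by (rule U_compact)
    show "continuous_on ({0..T} \<times> UNIV \<times> UU) (\<lambda>(s, x, w). f s x w)" by (rule f_cont)
    show "L \<ge> 0" by (rule L)
    show "\<And>s w x x'. s \<in> {0..T} \<Longrightarrow> w \<in> UU \<Longrightarrow> norm (f s x w - f s x' w) \<le> L * norm (x - x')"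
      by (rule lip)
    show "continuous_on ({0..T} \<times> UNIV) (\<lambda>(t, x). vl t x)" by (rule vl_cont)
    show "viscosity_subsolution f UU {(t, x). t \<in> {0<..<T} \<and> vl t x > 0} vl" by (rule vl_sub)
    show "abs_continuous_on a b y" by (rule ac_sub[OF yac]) (use a b \<tau>_in in auto)
    show "negligible N" by (rule N)
    show "\<And>s. s \<in> {a..b} \<Longrightarrow> s \<notin> N \<Longrightarrow> u s \<in> UU \<and> (y has_vector_derivative f s (y s) (u s)) (at s within {a..b})"
    proof -
      fix s assume s: "s \<in> {a..b}" "s \<notin> N"
      then have s': "s \<in> {t1..t2}" using sub by auto
      show "u s \<in> UU \<and> (y has_vector_derivative f s (y s) (u s)) (at s within {a..b})"
        using uU[OF s'] has_vector_derivative_within_subset[OF yd[OF s' s(2)] sub] by simp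
    qed
    show "\<And>s. s \<in> {a..b} \<Longrightarrow> vl s (y s) > 0"
    proof -
      fix s assume s: "s \<in> {a..b}"
      then have "s \<in> {t1..t2}" "s < \<tau>" using sub b by auto
      then show "vl s (y s) > 0" using wpos unfolding w_def by blast
    qed
  qed
  then show False using wb by simp
qed


end
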